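(* Let $1\le n\le L$. A word $w\in\Omega_{L,n}$ with $w_1=\bullet_1$ belongs to $\Omega'^{\{1\}}$ if and only if, for every $i\in\{1,\dots,n\}$, every letter $\Box_i$ in $w$ occurs at a position (in the linear order $1,\dots,L$) to the right of the position of $\bullet_i$.
   Context: Particle labels are taken modulo $n$. $\Omega_{L,n}$ is the set of words $w_1\cdots w_L$ on the ring $\mathbb{Z}/L\mathbb{Z}$ over the alphabet $\{\bullet_1,\dots,\bullet_n,\Box_1,\dots,\Box_n\}$ in which each $\bullet_k$ occurs exactly once, the $\bullet_1,\dots,\bullet_n$ appear in this cyclic order, and the remaining $L-n$ letters are arbitrary $\Box_i$'s. For $w\in\Omega_{L,n}$ let $b_k$ be the position of $\bullet_k$ and $C_k$ the set of positions strictly between $b_k$ and $b_{k+1}$ going cyclically forward ($b_{n+1}=b_1$). For $i,k\in\{1,\dots,n\}$ set $w_\Box(i,k)=p_1\cdots p_{i-1}q_{i+1}\cdots q_kp_{k+1}\cdots p_n$ if $i\le k$ and $w_\Box(i,k)=q_1\cdots q_kp_{k+1}\cdots p_{i-1}q_{i+1}\cdots q_n$ if $k<i$ (empty products are $1$), as monomials in indeterminates $p_1,\dots,p_n,q_1,\dots,q_n$. The weight is the monomial $\mathrm{wt}(w)=\prod_{k=1}^n\prod_{j\in C_k}w_\Box(i_j,k)$ where $w_j=\Box_{i_j}$. For $I\subseteq\{1,\dots,n\}$, $\Omega^I_{L,n}$ is the set of $w\in\Omega_{L,n}$ with $\mathrm{wt}(w)\neq0$ when $q_k=0$ for $k\in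 I$ and all other rates are positive (equivalently, the monomial $\mathrm{wt}(w)$ contains no $q_k$ with $k\in I$), and $\Omega'^{I}$ is the set of $w\in\Omega^I_{L,n}$ with $w_1=\bullet_1$. *)

theory Defs
  imports Main "HOL-Library.Multiset"
begin

text \<open>Letters: Bullet k is the particle of class k, Box i is the vacancy of class i.
Words of length L are lists; list index j (0-based) is the paper's position j+1.\<close>

datatype letter = Bullet nat | Box nat

fun is_bullet :: "letter \<Rightarrow> bool" where
  "is_bullet (Bullet _) = True" | "is_bullet (Box _) = False"

fun label :: "letter \<Rightarrow> nat" where
  "label (Bullet k) = k" | "label (Box i) = i"

definition Omega :: "nat \<Rightarrow> nat \<Rightarrow> letter list set" where
  "Omega L n = {w. length w = L \<and> (\<forall>x\<in>set w. label x \<in> {1..n})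
      \<and> (\<exists>r. filter is_bullet w = rotate r (map Bullet [1..<n+1]))}"

definition bpos :: "letter list \<Rightarrow> nat \<Rightarrow> nat" where
  "bpos w k = (THE j. j < length w \<and> w ! j = Bullet k)"

text \<open>Forward cyclic distance from a to c on Z/LZ, taking values in 1..L (L when c = a).\<close>
definition cdist :: "nat \<Rightarrow> nat \<Rightarrow> nat \<Rightarrow> nat" where
  "cdist L a c = ((c + L - a - 1) mod L) + 1"

text \<open>C_k: positions strictly between b_k and b_{k+1} going cyclically forward, b_{n+1} = b_1.\<close>
definition Cset :: "nat \<Rightarrow> letter list \<Rightarrow> nat \<Rightarrow> nat set" where
  "Cset n w k = (let L = length w; a = bpos w k; c = bpos w (if k = n then 1 else k + 1)
      in {j. j < L \<and> 0 < (j + L - a) mod L \<and> (j + L - a) mod L < cdist L a c})"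

text \<open>Indeterminates p_1..p_n, q_1..q_n; monomials are multisets of indeterminates
(product of monomials = sum of multisets).\<close>
datatype var = P nat | Q nat

definition wBox :: "nat \<Rightarrow> nat \<Rightarrow> nat \<Rightarrow> var multiset" where
  "wBox n i k = (if i \<le> k
     then mset (map P [1..<i]) + mset (map Q [i+1..<k+1]) + mset (map P [k+1..<n+1])
     else mset (map Q [1..<k+1]) + mset (map P [k+1..<i]) + mset (map Q [i+1..<n+1]))"

definition wt :: "nat \<Rightarrow> letter list \<Rightarrow> var multiset" where
  "wt n w = (\<Sum>k\<in>{1..n}. \<Sum>j\<in>Cset n w k. wBox n (label (w ! j)) k)"

definition OmegaI :: "nat \<Rightarrow> nat \<Rightarrow> nat set \<Rightarrow> letter list set" where
  "OmegaI L n I = {w \<in> Omega L n. \<forall>k\<in>I. Q k \<notin># wt n w}"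

definition OmegaI' :: "nat \<Rightarrow> nat \<Rightarrow> nat set \<Rightarrow> letter list set" where
  "OmegaI' L n I = {w \<in> OmegaI L n I. w ! 0 = Bullet 1}"

end

theory Submission
  imports Defs
begin

definition cnt :: "letter list \<Rightarrow> nat \<Rightarrow> nat" where
  "cnt w j = length (filter is_bullet (take j w))"

locale wsetup =
  fixes L n :: nat and w :: "letter list"
  assumes n1: "1 \<le> n" and nL: "n \<le> L"
    and wO: "w \<in> Omega L n" and w0: "w ! 0 = Bullet 1"
begin

lemma lenw: "length w = L" using wO by (simp add: Omega_def)

lemma labs: "j < L \<Longrightarrow> label (w ! j) \<in> {1..n}"
  using wO lenw by (auto simp: Omega_def)

lemma F: "filter is_bullet w = map Bullet [1..<n+1]"
proof -
  obtain r where r: "filter is_bullet w = rotate r (map Bullet [1..<n+1])"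
    using wO by (auto simp: Omega_def)
  have "w \<noteq> []" using lenw n1 nL by auto
  then have "w = w ! 0 # tl w" by (cases w) auto
  then have "filter is_bullet w = Bullet 1 # filter is_bullet (tl w)"
    using w0 by (metis filter.simps(2) is_bullet.simps(1))
  then have h: "hd (rotate r (map Bullet [1..<n+1])) = Bullet 1" using r by simp
  have ne: "map Bullet [1..<n+1] \<noteq> []" using n1 by simp
  have "hd (rotate r (map Bullet [1..<n+1])) = map Bullet [1..<n+1] ! (r mod n)"
    using hd_rotate_conv_nth[OF ne, of r] by (simp del: upt_Suc)
  also have "\<dots> = Bullet (r mod n + 1)" using n1
    by (simp add: nth_upt del: upt_Suc)
  finally have "r mod n = 0" using h by simp
  then have "rotate r (map Bullet [1..<n+1]) = map Bullet [1..<n+1]"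
    by (metis length_map length_upt diff_add_inverse2 rotate_conv_mod rotate0 id_apply)
  then show ?thesis using r by simp
qed

lemma cnt_Suc: "j < L \<Longrightarrow> cnt w (Suc j) = cnt w j + (if is_bullet (w ! j) then 1 else 0)"
  using lenw by (simp add: cnt_def take_Suc_conv_app_nth)

lemma cnt_mono: "j \<le> j' \<Longrightarrow> cnt w j \<le> cnt w j'"
proof -
  assume "j \<le> j'"
  then have "take j' w = take j w @ take (j' - j) (drop j w)"
    by (metis le_add_diff_inverse take_add)
  then show ?thesis by (simp add: cnt_def)
qed

lemma cnt_strict: "j < j' \<Longrightarrow> j < L \<Longrightarrow> is_bullet (w ! j) \<Longrightarrow> cnt w j < cnt w j'"
  using cnt_Suc[of j] cnt_mono[of "Suc j" j'] by simp

lemma cnt_le: "cnt w j \<le> n"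
proof -
  have "cnt w j \<le> cnt w (max j L)" by (rule cnt_mono) simp
  also have "\<dots> = n" using F lenw by (simp add: cnt_def)
  finally show ?thesis .
qed

lemma lab: assumes "j < L" "is_bullet (w ! j)"
  shows "w ! j = Bullet (cnt w j + 1) \<and> cnt w j < n"
proof -
  have "w = take j w @ w ! j # drop (Suc j) w" using assms lenw
    by (simp add: id_take_nth_drop)
  then have e: "filter is_bullet w = filter is_bullet (take j w) @ w ! j # filter is_bullet (drop (Suc j) w)"
    using assms(2) by (metis filter.simps(2) filter_append)
  then have "filter is_bullet w ! cnt w j = w ! j" by (simp add: cnt_def nth_append)
  moreover have "cnt w j < length (filter is_bullet w)" using e by (simp add: cnt_def)
  ultimately show ?thesis using F by (simp add: nth_upt del: upt_Suc)
qed

lemma uniq: "j1 < L \<Longrightarrow> j2 < L \<Longrightarrow> w ! j1 = Bullet k \<Longrightarrow> w ! j2 = Bullet k \<Longrightarrow> j1 = j2"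
proof (rule ccontr)
  assume a: "j1 < L" "j2 < L" "w ! j1 = Bullet k" "w ! j2 = Bullet k" "j1 \<noteq> j2"
  have l1: "cnt w j1 + 1 = k" using lab[of j1] a by simp
  have l2: "cnt w j2 + 1 = k" using lab[of j2] a by simp
  show False
  proof (cases "j1 < j2")
    case True then show ?thesis using cnt_strict[of j1 j2] a l1 l2 by simp
  next
    case False then have "j2 < j1" using a by simp
    then show ?thesis using cnt_strict[of j2 j1] a l1 l2 by simp
  qed
qed

lemma bpos_eq: "j < L \<Longrightarrow> w ! j = Bullet k \<Longrightarrow> bpos w k = j"
  unfolding bpos_def using uniq lenw by (intro the_equality) auto

lemma bpos: assumes "k \<in> {1..n}" shows "bpos w k < L \<and> w ! bpos w k = Bullet k"
proof -
  have "Bullet k \<in> set (filter is_bullet w)" using F assms by auto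
  then have "Bullet k \<in> set w" by simp
  then obtain j where "j < L" "w ! j = Bullet k" using lenw by (metis in_set_conv_nth)
  then show ?thesis using bpos_eq by simp
qed

lemma bullet_label: "j < L \<Longrightarrow> w ! j = Bullet m \<Longrightarrow> m \<in> {1..n}"
  using lab[of j] by auto

lemma cnt_bpos: "k \<in> {1..n} \<Longrightarrow> cnt w (bpos w k) = k - 1"
  using bpos[of k] lab[of "bpos w k"] by auto

lemma bpos_mono: assumes "k \<in> {1..n}" "k' \<in> {1..n}" "k < k'" shows "bpos w k < bpos w k'"
proof (rule ccontr)
  assume "\<not> ?thesis"
  moreover have "bpos w k \<noteq> bpos w k'" using bpos[OF assms(1)] bpos[OF assms(2)] assms(3) by auto
  ultimately have "bpos w k' < bpos w k" by simp
  then have "cnt w (bpos w k') < cnt w (bpos w k)"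
    using cnt_strict bpos[OF assms(2)] by simp
  then show False using cnt_bpos assms by auto
qed

lemma bpos1: "bpos w 1 = 0" using bpos_eq[of 0 1] w0 n1 nL by simp

lemma Cset_char: assumes k: "k \<in> {1..n}"
  shows "j \<in> Cset n w k \<longleftrightarrow> j < L \<and> bpos w k < j \<and> (k < n \<longrightarrow> j < bpos w (k+1))"
proof -
  define a where "a = bpos w k"
  have aL: "a < L" using bpos[OF k] a_def by simp
  have d: "(j + L - a) mod L = (if a \<le> j then j - a else j + L - a)" if "j < L" for j
  proof (cases "a \<le> j")
    case True
    then have "j + L - a = (j - a) + L" by simp
    then have "(j + L - a) mod L = (j - a) mod L" by simp
    then show ?thesis using True that by simp
  next
    case False then show ?thesis using that aL by simp
  qed
  show ?thesis
  proof (cases "k = n")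
    case True
    have cd: "cdist L a 0 = L - a" using aL by (simp add: cdist_def)
    show ?thesis unfolding Cset_def Let_def lenw using True bpos1 cd d a_def
      by (auto split: if_splits)
  next
    case False
    define c where "c = bpos w (k+1)"
    have kk: "k+1 \<in> {1..n}" using k False by auto
    have ac: "a < c" using bpos_mono[OF k kk] a_def c_def by simp
    have cL: "c < L" using bpos[OF kk] c_def by simp
    have "c + L - a - 1 = (c - a - 1) + L" using ac by simp
    then have "(c + L - a - 1) mod L = (c - a - 1) mod L" by simp
    then have cd: "cdist L a c = c - a" using ac cL by (simp add: cdist_def)
    show ?thesis unfolding Cset_def Let_def lenw using False k cd d a_def c_def ac cL
      by (auto split: if_splits)
  qed
qed

lemma finC: "finite (Cset n w k)"
  unfolding Cset_def Let_def by simp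

lemma wt_Q1: "Q 1 \<in># wt n w \<longleftrightarrow> (\<exists>k\<in>{1..n}. \<exists>j\<in>Cset n w k. Q 1 \<in># wBox n (label (w ! j)) k)"
  unfolding wt_def by (simp add: set_mset_sum finC)

lemma wBox_Q1: "1 \<le> i \<Longrightarrow> 1 \<le> k \<Longrightarrow> Q 1 \<in># wBox n i k \<longleftrightarrow> k < i"
  unfolding wBox_def by auto

end

theorem proposition5p3:
  fixes L n :: nat and w :: "letter list"
  assumes "1 \<le> n" and "n \<le> L"
    and "w \<in> Omega L n" and "w ! 0 = Bullet 1"
  shows "w \<in> OmegaI' L n {1} \<longleftrightarrow>
    (\<forall>i\<in>{1..n}. \<forall>j<L. w ! j = Box i \<longrightarrow> bpos w i < j)"
proof -
  interpret wsetup L n w using assms by unfold_locales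
  have e: "w \<in> OmegaI' L n {1} \<longleftrightarrow> \<not> Q 1 \<in># wt n w"
    using assms by (simp add: OmegaI'_def OmegaI_def)
  show ?thesis unfolding e
  proof
    assume nq: "\<not> Q 1 \<in># wt n w"
    show "\<forall>i\<in>{1..n}. \<forall>j<L. w ! j = Box i \<longrightarrow> bpos w i < j"
    proof (intro ballI allI impI)
      fix i j assume i: "i \<in> {1..n}" and j: "j < L" and wj: "w ! j = Box i"
      define k where "k = cnt w j"
      have j0: "j \<noteq> 0"
      proof
        assume "j = 0" then show False using wj assms(4) by simp
      qed
      have "cnt w 1 = 1" using cnt_Suc[of 0] assms by (simp add: cnt_def)
      then have k1: "1 \<le> k" using cnt_mono[of 1 j] j0 k_def by simp
      have kn: "k \<le> n" using cnt_le k_def by simp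
      have kin: "k \<in> {1..n}" using k1 kn by simp
      have bk: "bpos w k < j"
      proof (rule ccontr)
        assume "\<not> ?thesis"
        then have "cnt w j \<le> cnt w (bpos w k)" using cnt_mono by simp
        then show False using cnt_bpos[OF kin] k_def k1 by simp
      qed
      have bk1: "j < bpos w (k+1)" if "k < n"
      proof (rule ccontr)
        assume nt: "\<not> ?thesis"
        have kk: "k+1 \<in> {1..n}" using that k1 by simp
        have "bpos w (k+1) \<noteq> j" using bpos[OF kk] wj by auto
        then have "bpos w (k+1) < j" using nt by simp
        then have "cnt w (bpos w (k+1)) < cnt w j" using cnt_strict bpos[OF kk] by simp
        then show False using cnt_bpos[OF kk] k_def by simp
      qed
      have "j \<in> Cset n w k" using Cset_char[OF kin] j bk bk1 by simp
      then have "\<not> Q 1 \<in># wBox n (label (w ! j)) k" using nq wt_Q1 kin by blast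
      then have "i \<le> k" using wBox_Q1[of i k] i k1 wj by auto
      then show "bpos w i < j"
      proof (cases "i = k")
        case True then show ?thesis using bk by simp
      next
        case False then show ?thesis using bpos_mono[OF i kin] \<open>i \<le> k\<close> bk by simp
      qed
    qed
  next
    assume c: "\<forall>i\<in>{1..n}. \<forall>j<L. w ! j = Box i \<longrightarrow> bpos w i < j"
    show "\<not> Q 1 \<in># wt n w"
    proof
      assume "Q 1 \<in># wt n w"
      then obtain k j where kin: "k \<in> {1..n}" and jC: "j \<in> Cset n w k"
        and q: "Q 1 \<in># wBox n (label (w ! j)) k" using wt_Q1 by blast
      have jc: "j < L" "bpos w k < j" "k < n \<longrightarrow> j < bpos w (k+1)"
        using Cset_char[OF kin] jC by auto
      have lin: "label (w ! j) \<in> {1..n}" using labs jc by simp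
      have kl: "k < label (w ! j)" using wBox_Q1 q lin kin by auto
      show False
      proof (cases "w ! j")
        case (Bullet m)
        have m: "m \<in> {1..n}" using bullet_label jc Bullet by simp
        have bm: "bpos w m = j" using bpos_eq jc Bullet by simp
        have km: "k < m" using kl Bullet by simp
        then have kn: "k < n" using m by simp
        have "m = k + 1 \<or> k + 1 < m" using km by auto
        then show False
        proof
          assume "m = k+1" then show False using jc kn bm by simp
        next
          assume "k+1 < m"
          then have "bpos w (k+1) < bpos w m" using bpos_mono[of "k+1" m] m kin by simp
          then show False using jc kn bm by simp
        qed
      next
        case (Box i)
        have i: "i \<in> {1..n}" and ki: "k < i" using lin kl Box by auto
        have bi: "bpos w i < j" using c i jc Box by simp
        have kn: "k < n" using ki i by simp
        have "bpos w (k+1) \<le> bpos w i"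
        proof (cases "k+1 = i")
          case False then show ?thesis using bpos_mono[of "k+1" i] i ki kin by simp
        qed simp
        then show False using bi jc kn by simp
      qed
    qed
  qed
qed

end
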